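(* Let $(x_1,y_1),\dots,(x_n,y_n)\in\mathbb{R}^d\times\mathbb{R}^k$, $r\in\{1,\dots,n\}$, and let $\{f_\theta:\mathbb{R}^d\to\mathbb{R}^k\}_{\theta\in\Theta}$ be a parametric family of predictors. Consider $$\text{(A)}\quad \min\ \frac1n\sum_{i=1}^n\mathrm{Vol}\big(\mathbb{B}(p,M(x_i),f_\theta(x_i))\big)\quad\text{s.t.}\ M(\cdot)\succcurlyeq 0,\ p>0,\ \theta\in\Theta,\ \mathrm{Card}\{i\in[n]: \|M(x_i)(y_i-f_\theta(x_i))\|_p\le 1\}\ge n-r+1,$$ where $M(\cdot)$ ranges over functions from $\mathbb{R}^d$ to symmetric positive semidefinite $k\times k$ matrices, and $$\text{(B)}\quad \min\ \log\Big(\sum_{i=1}^n\frac{1}{\det(\Lambda(x_i))}\Big)+k\log\sigma_r\{\|\Lambda(x_i)(y_i-f_\theta(x_i))\|_p\}+\log\lambda(B_{\|\cdot\|_p}(1))\quad\text{s.t.}\ \Lambda(\cdot)\succcurlyeq 0,\ p>0,\ \theta\in\Theta,$$ with $\Lambda(\cdot)$ ranging over the same class of functions. Then (A) and (B) are equivalent, and an optimal $M^\star(\cdot)$ for (A) is recovered from an optimal solution $(\Lambda^\star(\cdot),p^\star,\theta^\star)$ of (B) as $$M^\star(x)=\sigma_r\{\|\Lambda^\star(x_i)(y_i-f_{\theta^\star}(x_i))\|_{p^\star}\}^{-1}\Lambda^\star(x).$$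
   Context: For $p>0$, $\|z\|_p=(\sum_j|z_j|^p)^{1/p}$. For a symmetric positive semidefinite $M\in\mathbb{R}^{k\times k}$ and $c\in\mathbb{R}^k$, $\mathbb{B}(p,M,c)=\{y\in\mathbb{R}^k:\|M(y-c)\|_p\le 1\}$, whose Lebesgue measure is $\mathrm{Vol}(\mathbb{B}(p,M,c))=\lambda(B_{\|\cdot\|_p}(1))\det(M)^{-1}$ ($+\infty$ if $M$ singular), where $\lambda(B_{\|\cdot\|_p}(1))=\frac{2^k\Gamma(1+1/p)^k}{\Gamma(1+k/p)}$. For reals $a_1,\dots,a_n$, $\sigma_r\{a_i\}$ denotes the $r$-th largest of them. $[n]=\{1,\dots,n\}$. *)

theory Defs
  imports "HOL-Analysis.Analysis"
begin

definition pnorm :: "real \<Rightarrow> real^'k \<Rightarrow> real" where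
  "pnorm p z = (\<Sum>j\<in>UNIV. \<bar>z $ j\<bar> powr p) powr (1 / p)"

text \<open>Lebesgue measure of the unit p-ball in R^k.\<close>
definition unit_ball_vol :: "real \<Rightarrow> nat \<Rightarrow> real" where
  "unit_ball_vol p k = 2 ^ k * Gamma (1 + 1 / p) ^ k / Gamma (1 + real k / p)"

definition psd :: "real^'k^'k \<Rightarrow> bool" where
  "psd A \<longleftrightarrow> transpose A = A \<and> (\<forall>v. 0 \<le> v \<bullet> (A *v v))"

text \<open>Vol(B(p,M,c)) = lambda(B_p(1)) * det(M)^(-1), +infinity if M singular
  (formula given in the paper's context, for M symmetric PSD).\<close>
definition vol_ball :: "real \<Rightarrow> real^'k^'k \<Rightarrow> real^'k \<Rightarrow> ereal" where
  "vol_ball p M c = (if det M = 0 then \<infinity> else ereal (unit_ball_vol p CARD('k) / det M))"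

text \<open>sigma_r of a list of reals: the r-th largest entry (r counted from 1).\<close>
definition kth_largest :: "nat \<Rightarrow> real list \<Rightarrow> real" where
  "kth_largest r as = rev (sort as) ! (r - 1)"

definition sigma_res ::
  "('t \<Rightarrow> real^'d \<Rightarrow> real^'k) \<Rightarrow> (nat \<Rightarrow> real^'d) \<Rightarrow> (nat \<Rightarrow> real^'k) \<Rightarrow> nat \<Rightarrow> nat
    \<Rightarrow> (real^'d \<Rightarrow> real^'k^'k) \<Rightarrow> real \<Rightarrow> 't \<Rightarrow> real" where
  "sigma_res f x y n r L p \<theta> =
     kth_largest r (map (\<lambda>i. pnorm p (L (x i) *v (y i - f \<theta> (x i)))) [1..<n+1])"

definition feasA ::
  "'t set \<Rightarrow> ('t \<Rightarrow> real^'d \<Rightarrow> real^'k) \<Rightarrow> (nat \<Rightarrow> real^'d) \<Rightarrow> (nat \<Rightarrow> real^'k) \<Rightarrow> nat \<Rightarrow> nat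
    \<Rightarrow> (real^'d \<Rightarrow> real^'k^'k) \<Rightarrow> real \<Rightarrow> 't \<Rightarrow> bool" where
  "feasA \<Theta> f x y n r M p \<theta> \<longleftrightarrow>
     (\<forall>z. psd (M z)) \<and> 0 < p \<and> \<theta> \<in> \<Theta> \<and>
     n - r + 1 \<le> card {i\<in>{1..n}. pnorm p (M (x i) *v (y i - f \<theta> (x i))) \<le> 1}"

definition objA ::
  "('t \<Rightarrow> real^'d \<Rightarrow> real^'k) \<Rightarrow> (nat \<Rightarrow> real^'d) \<Rightarrow> nat
    \<Rightarrow> (real^'d \<Rightarrow> real^'k^'k) \<Rightarrow> real \<Rightarrow> 't \<Rightarrow> ereal" where
  "objA f x n M p \<theta> = ereal (1 / real n) * (\<Sum>i\<in>{1..n}. vol_ball p (M (x i)) (f \<theta> (x i)))"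

definition optA ::
  "'t set \<Rightarrow> ('t \<Rightarrow> real^'d \<Rightarrow> real^'k) \<Rightarrow> (nat \<Rightarrow> real^'d) \<Rightarrow> (nat \<Rightarrow> real^'k) \<Rightarrow> nat \<Rightarrow> nat
    \<Rightarrow> (real^'d \<Rightarrow> real^'k^'k) \<Rightarrow> real \<Rightarrow> 't \<Rightarrow> bool" where
  "optA \<Theta> f x y n r M p \<theta> \<longleftrightarrow> feasA \<Theta> f x y n r M p \<theta> \<and>
     (\<forall>M' p' \<theta>'. feasA \<Theta> f x y n r M' p' \<theta>' \<longrightarrow> objA f x n M p \<theta> \<le> objA f x n M' p' \<theta>')"

definition valA ::
  "'t set \<Rightarrow> ('t \<Rightarrow> real^'d \<Rightarrow> real^'k) \<Rightarrow> (nat \<Rightarrow> real^'d) \<Rightarrow> (nat \<Rightarrow> real^'k) \<Rightarrow> nat \<Rightarrow> nat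
    \<Rightarrow> ereal" where
  "valA \<Theta> f x y n r = (INF (M, p, \<theta>)\<in>{(M, p, \<theta>). feasA \<Theta> f x y n r M p \<theta>}. objA f x n M p \<theta>)"

text \<open>Problem (B).  Conventions: if some det(Lambda(x_i)) = 0 the first log term is +infinity and
  the objective is +infinity; otherwise if sigma_r = 0 the objective is -infinity.\<close>
definition feasB ::
  "'t set \<Rightarrow> (real^'d \<Rightarrow> real^'k^'k) \<Rightarrow> real \<Rightarrow> 't \<Rightarrow> bool" where
  "feasB \<Theta> L p \<theta> \<longleftrightarrow> (\<forall>z. psd (L z)) \<and> 0 < p \<and> \<theta> \<in> \<Theta>"

definition objB ::
  "('t \<Rightarrow> real^'d \<Rightarrow> real^'k) \<Rightarrow> (nat \<Rightarrow> real^'d) \<Rightarrow> (nat \<Rightarrow> real^'k) \<Rightarrow> nat \<Rightarrow> nat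
    \<Rightarrow> (real^'d \<Rightarrow> real^'k^'k) \<Rightarrow> real \<Rightarrow> 't \<Rightarrow> ereal" where
  "objB f x y n r L p \<theta> =
     (if \<exists>i\<in>{1..n}. det (L (x i)) = 0 then \<infinity>
      else if sigma_res f x y n r L p \<theta> = 0 then -\<infinity>
      else ereal (ln (\<Sum>i\<in>{1..n}. 1 / det (L (x i)))
                  + real CARD('k) * ln (sigma_res f x y n r L p \<theta>)
                  + ln (unit_ball_vol p CARD('k))))"

definition optB ::
  "'t set \<Rightarrow> ('t \<Rightarrow> real^'d \<Rightarrow> real^'k) \<Rightarrow> (nat \<Rightarrow> real^'d) \<Rightarrow> (nat \<Rightarrow> real^'k) \<Rightarrow> nat \<Rightarrow> nat
    \<Rightarrow> (real^'d \<Rightarrow> real^'k^'k) \<Rightarrow> real \<Rightarrow> 't \<Rightarrow> bool" where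
  "optB \<Theta> f x y n r L p \<theta> \<longleftrightarrow> feasB \<Theta> L p \<theta> \<and>
     (\<forall>L' p' \<theta>'. feasB \<Theta> L' p' \<theta>' \<longrightarrow> objB f x y n r L p \<theta> \<le> objB f x y n r L' p' \<theta>')"

definition valB ::
  "'t set \<Rightarrow> ('t \<Rightarrow> real^'d \<Rightarrow> real^'k) \<Rightarrow> (nat \<Rightarrow> real^'d) \<Rightarrow> (nat \<Rightarrow> real^'k) \<Rightarrow> nat \<Rightarrow> nat
    \<Rightarrow> ereal" where
  "valB \<Theta> f x y n r = (INF (L, p, \<theta>)\<in>{(L, p, \<theta>). feasB \<Theta> L p \<theta>}. objB f x y n r L p \<theta>)"

end

theory Submission
  imports Defs
begin

lemma det_nz_of_ker:
  fixes A :: "real^'n^'n"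
  assumes "\<And>v. A *v v = 0 \<Longrightarrow> v = 0"
  shows "det A \<noteq> 0"
proof -
  have "\<exists>B. B ** A = mat 1" using assms matrix_left_invertible_ker by blast
  then have "invertible A" using invertible_left_inverse by blast
  then show ?thesis using invertible_det_nz by blast
qed

lemma det_scaleR: "det (c *\<^sub>R (A::real^'n^'n)) = c ^ CARD('n) * det A"
proof -
  have "\<And>p. (\<Prod>i\<in>UNIV. (c *\<^sub>R A)$i$p i) = c ^ CARD('n) * (\<Prod>i\<in>UNIV. A$i$p i)"
    by (simp add: prod.distrib)
  then show ?thesis unfolding det_def by (simp add: sum_distrib_left algebra_simps)
qed

lemma det_psd_nonneg:
  fixes A :: "real^'n^'n"
  assumes "psd A"
  shows "det A \<ge> 0"
proof (rule ccontr)
  assume neg: "\<not> det A \<ge> 0"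
  define B where "B s = (1 - s) *\<^sub>R (mat 1) + s *\<^sub>R A" for s :: real
  define g where "g s = det (B s)" for s
  have cont: "continuous_on {0..1} g"
    unfolding g_def B_def det_def
    by (intro continuous_intros)
  have "g 1 \<le> 0" "0 \<le> g 0" using neg by (auto simp: g_def B_def)
  from IVT2'[OF this _ cont] obtain s where s: "0 \<le> s" "s \<le> 1" "g s = 0" by auto
  have "s < 1" using s neg by (cases "s = 1") (auto simp: g_def B_def)
  have "det (B s) \<noteq> 0"
  proof (rule det_nz_of_ker)
    fix v assume v: "B s *v v = 0"
    have "v \<bullet> (B s *v v) = (1 - s) * (v \<bullet> v) + s * (v \<bullet> (A *v v))"
      by (simp add: B_def algebra_simps scaleR_matrix_vector_assoc[symmetric])
    moreover have "0 \<le> v \<bullet> (A *v v)" using assms by (simp add: psd_def)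
    ultimately have "(1 - s) * (v \<bullet> v) \<le> 0" using v s by (simp add: mult_nonneg_nonneg) 
       (smt (verit) mult_nonneg_nonneg)
    then have "v \<bullet> v \<le> 0" using \<open>s < 1\<close> by (simp add: mult_le_0_iff)
    then show "v = 0" by (metis inner_eq_zero_iff inner_ge_zero order_antisym)
  qed
  then show False using s by (simp add: g_def)
qed

lemma pnorm_nonneg: "0 \<le> pnorm p v" by (simp add: pnorm_def)

lemma pnorm_scale:
  assumes "0 \<le> c" "0 < p"
  shows "pnorm p (c *\<^sub>R v) = c * pnorm p v"
proof -
  have "(\<Sum>j\<in>UNIV. \<bar>(c *\<^sub>R v) $ j\<bar> powr p) = c powr p * (\<Sum>j\<in>UNIV. \<bar>v $ j\<bar> powr p)"
    using assms by (simp add: abs_mult powr_mult sum_distrib_left)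
  moreover have "(c powr p * S) powr (1/p) = c * S powr (1/p)" if "S \<ge> 0" for S
    using assms that by (simp add: powr_mult powr_powr)
  ultimately show ?thesis unfolding pnorm_def by (simp add: sum_nonneg)
qed

lemma kth_le_iff:
  fixes xs :: "real list"
  assumes "1 \<le> r" "r \<le> length xs"
  shows "kth_largest r xs \<le> t \<longleftrightarrow> length xs - r + 1 \<le> length (filter (\<lambda>a. a \<le> t) xs)"
proof -
  define zs where "zs = sort xs"
  define n where "n = length xs"
  define m where "m = n - r"
  have lz: "length zs = n" by (simp add: zs_def n_def)
  have sz: "sorted zs" by (simp add: zs_def)
  have mn: "m < n" using assms by (simp add: m_def n_def)
  have k: "kth_largest r xs = zs ! m"
    unfolding kth_largest_def zs_def[symmetric] using assms lz
    by (simp add: rev_nth m_def n_def Suc_diff_Suc)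
  have "length (filter (\<lambda>a. a \<le> t) xs) = length (filter (\<lambda>a. a \<le> t) zs)"
    by (metis zs_def filter_sort length_sort)
  also have "\<dots> = card {i. i < n \<and> zs ! i \<le> t}"
    by (simp add: length_filter_conv_card lz)
  finally have L: "length (filter (\<lambda>a. a \<le> t) xs) = card {i. i < n \<and> zs ! i \<le> t}" .
  have fin: "finite {i. i < n \<and> zs ! i \<le> t}" by simp
  show ?thesis
  proof
    assume "kth_largest r xs \<le> t"
    then have "zs ! m \<le> t" by (simp add: k)
    then have "{0..m} \<subseteq> {i. i < n \<and> zs ! i \<le> t}"
      proof (intro subsetI CollectI conjI)
      fix i assume "i \<in> {0..m}"
      then have "i \<le> m" by simp
      then show "i < n" using mn by simp
      have "zs ! i \<le> zs ! m" using sorted_nth_mono[OF sz \<open>i \<le> m\<close>] mn lz by simp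
      then show "zs ! i \<le> t" using \<open>zs ! m \<le> t\<close> by simp
    qed
    from card_mono[OF fin this] show "length xs - r + 1 \<le> length (filter (\<lambda>a. a \<le> t) xs)"
      using L by (simp add: m_def n_def)
  next
    assume A: "length xs - r + 1 \<le> length (filter (\<lambda>a. a \<le> t) xs)"
    show "kth_largest r xs \<le> t"
    proof (rule ccontr)
      assume "\<not> kth_largest r xs \<le> t"
      then have "zs ! m > t" by (simp add: k)
      have "{i. i < n \<and> zs ! i \<le> t} \<subseteq> {..<m}"
        proof
        fix i assume "i \<in> {i. i < n \<and> zs ! i \<le> t}"
        then have i: "i < n" "zs ! i \<le> t" by auto
        show "i \<in> {..<m}"
        proof (rule ccontr)
          assume "i \<notin> {..<m}"
          then have "m \<le> i" by simp
          then have "zs ! m \<le> zs ! i" using sorted_nth_mono[OF sz] i lz by simp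
          then show False using i \<open>zs ! m > t\<close> by simp
        qed
      qed
      from card_mono[OF _ this] have "card {i. i < n \<and> zs ! i \<le> t} \<le> m" by simp
      then show False using A L by (simp add: m_def n_def)
    qed
  qed
qed

lemma card_filter_list:
  "card {i\<in>{1..n}. s i \<le> (t::real)} = length (filter (\<lambda>a. a \<le> t) (map s [1..<n+1]))"
proof -
  have "length (filter (\<lambda>a. a \<le> t) (map s [1..<n+1])) = length (filter (\<lambda>i. s i \<le> t) [1..<n+1])"
    by (simp add: filter_map comp_def)
  also have "\<dots> = card (set (filter (\<lambda>i. s i \<le> t) [1..<n+1]))"
    by (rule distinct_card[symmetric]) (simp del: upt_Suc)
  also have "set (filter (\<lambda>i. s i \<le> t) [1..<n+1]) = {i\<in>{1..n}. s i \<le> t}" by auto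
  finally show ?thesis by (rule sym)
qed

lemma kth_nonneg:
  assumes "\<forall>a\<in>set xs. (0::real) \<le> a" "1 \<le> r" "r \<le> length xs"
  shows "0 \<le> kth_largest r xs"
proof -
  have "rev (sort xs) ! (r - 1) \<in> set (rev (sort xs))" using assms by (intro nth_mem) simp
  then show ?thesis using assms unfolding kth_largest_def by auto
qed

lemma kth_scale:
  fixes xs :: "real list"
  assumes "1 \<le> r" "r \<le> length xs" "0 < c"
  shows "kth_largest r (map (\<lambda>u. c * u) xs) = c * kth_largest r xs"
proof -
  have key: "kth_largest r (map (\<lambda>u. c * u) xs) \<le> t \<longleftrightarrow> c * kth_largest r xs \<le> t" for t
  proof -
    have "filter (\<lambda>a. a \<le> t) (map (\<lambda>u. c * u) xs) = map (\<lambda>u. c * u) (filter (\<lambda>u. u \<le> t / c) xs)"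
      using assms(3) by (simp add: filter_map comp_def pos_le_divide_eq mult.commute)
    then have "length (filter (\<lambda>a. a \<le> t) (map (\<lambda>u. c * u) xs)) = length (filter (\<lambda>u. u \<le> t / c) xs)"
      by simp
    moreover have "c * kth_largest r xs \<le> t \<longleftrightarrow> kth_largest r xs \<le> t / c"
      using assms(3) by (simp add: pos_le_divide_eq mult.commute)
    ultimately show ?thesis using kth_le_iff[of r xs] kth_le_iff[of r "map (\<lambda>u. c * u) xs"] assms
      by simp
  qed
  show ?thesis using key[of "c * kth_largest r xs"] key[of "kth_largest r (map (\<lambda>u. c * u) xs)"]
    by linarith
qed

lemma sigma_scale:
  assumes "1 \<le> r" "r \<le> n" "0 < c" "0 < p"
  shows "sigma_res f x y n r (\<lambda>z. c *\<^sub>R L z) p \<theta> = c * sigma_res f x y n r L p \<theta>"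
proof -
  have eq: "map (\<lambda>i. pnorm p ((c *\<^sub>R L (x i)) *v (y i - f \<theta> (x i)))) [1..<n+1]
      = map (\<lambda>u. c * u) (map (\<lambda>i. pnorm p (L (x i) *v (y i - f \<theta> (x i)))) [1..<n+1])"
    using assms by (simp del: upt_Suc add: scaleR_matrix_vector_assoc[symmetric] pnorm_scale)
  show ?thesis unfolding sigma_res_def eq by (rule kth_scale) (use assms in auto)
qed

lemma sigma_nonneg:
  assumes "1 \<le> r" "r \<le> n"
  shows "0 \<le> sigma_res f x y n r L p \<theta>"
  unfolding sigma_res_def using assms by (intro kth_nonneg) (auto simp: pnorm_nonneg)

lemma feasA_iff:
  assumes "1 \<le> r" "r \<le> n"
  shows "feasA \<Theta> f x y n r M p \<theta> \<longleftrightarrow>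
    (\<forall>z. psd (M z)) \<and> 0 < p \<and> \<theta> \<in> \<Theta> \<and> sigma_res f x y n r M p \<theta> \<le> 1"
  unfolding feasA_def sigma_res_def card_filter_list
  using kth_le_iff[of r "map (\<lambda>i. pnorm p (M (x i) *v (y i - f \<theta> (x i)))) [1..<n+1]" 1] assms
  by simp

lemma V_pos: "0 < p \<Longrightarrow> 0 < unit_ball_vol p k"
  unfolding unit_ball_vol_def by (intro divide_pos_pos mult_pos_pos zero_less_power Gamma_real_pos)
    (auto intro!: add_pos_nonneg)

lemma psd_scale: "psd A \<Longrightarrow> 0 \<le> c \<Longrightarrow> psd (c *\<^sub>R A)"
  unfolding psd_def
  by (simp add: scaleR_matrix_vector_assoc[symmetric] transpose_scalar)

lemma psd_one: "psd (mat 1)"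
  unfolding psd_def by simp

lemma objA_fin:
  fixes M :: "real^'d \<Rightarrow> real^'k^'k"
  assumes "\<forall>i\<in>{1..n}. det (M (x i)) \<noteq> 0"
  shows "objA f x n M p \<theta> = ereal (unit_ball_vol p CARD('k) * (\<Sum>i\<in>{1..n}. 1 / det (M (x i))) / real n)"
proof -
  have "(\<Sum>i\<in>{1..n}. vol_ball p (M (x i)) (f \<theta> (x i)))
      = (\<Sum>i\<in>{1..n}. ereal (unit_ball_vol p CARD('k) / det (M (x i))))"
    using assms by (intro sum.cong) (auto simp: vol_ball_def)
  also have "\<dots> = ereal (\<Sum>i\<in>{1..n}. unit_ball_vol p CARD('k) / det (M (x i)))"
    by (rule sum_ereal)
  also have "\<dots> = ereal (unit_ball_vol p CARD('k) * (\<Sum>i\<in>{1..n}. 1 / det (M (x i))))"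
    by (simp add: sum_distrib_left)
  finally show ?thesis unfolding objA_def
    by simp
qed

lemma objA_inf:
  fixes M :: "real^'d \<Rightarrow> real^'k^'k"
  assumes "1 \<le> n" "\<exists>i\<in>{1..n}. det (M (x i)) = 0"
  shows "objA f x n M p \<theta> = \<infinity>"
proof -
  have "(\<Sum>i\<in>{1..n}. vol_ball p (M (x i)) (f \<theta> (x i))) = \<infinity>"
    using assms by (subst sum_Pinfty) (auto simp: vol_ball_def)
  then show ?thesis unfolding objA_def using assms by simp
qed

definition gv :: "nat \<Rightarrow> ereal \<Rightarrow> ereal" where
  "gv n v = (case v of ereal b \<Rightarrow> ereal (exp b / real n) | PInfty \<Rightarrow> \<infinity> | MInfty \<Rightarrow> 0)"

lemma gv_simps [simp]: "gv n (ereal b) = ereal (exp b / real n)" "gv n \<infinity> = \<infinity>" "gv n (-\<infinity>) = 0"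
  by (simp_all add: gv_def)

lemma gv_nonneg: "0 \<le> gv n v"
  by (cases v) auto

lemma gv_mono: "a \<le> b \<Longrightarrow> gv n a \<le> gv n b"
  by (cases a; cases b) (auto intro: divide_right_mono)

lemma valA_le:
  "feasA \<Theta> f x y n r M p \<theta> \<Longrightarrow> valA \<Theta> f x y n r \<le> objA f x n M p \<theta>"
  unfolding valA_def by (rule INF_lower2[of "(M, p, \<theta>)"]) auto

lemma valB_le:
  "feasB \<Theta> L p \<theta> \<Longrightarrow> valB \<Theta> f x y n r \<le> objB f x y n r L p \<theta>"
  unfolding valB_def by (rule INF_lower2[of "(L, p, \<theta>)"]) auto

lemma objB_val:
  fixes L :: "real^'d \<Rightarrow> real^'k^'k"
  assumes "1 \<le> n" "\<forall>i\<in>{1..n}. det (L (x i)) > 0" "sigma_res f x y n r L p \<theta> > 0" "0 < p"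
  shows "gv n (objB f x y n r L p \<theta>) = ereal (unit_ball_vol p CARD('k) * (\<Sum>i\<in>{1..n}. 1 / det (L (x i)))
     * sigma_res f x y n r L p \<theta> ^ CARD('k) / real n)"
proof -
  define S where "S = (\<Sum>i\<in>{1..n}. 1 / det (L (x i)))"
  define s where "s = sigma_res f x y n r L p \<theta>"
  define V where "V = unit_ball_vol p CARD('k)"
  have S: "S > 0" unfolding S_def using assms by (intro sum_pos) auto
  have V: "V > 0" unfolding V_def using assms V_pos by blast
  have s: "s > 0" using assms s_def by simp
  have "objB f x y n r L p \<theta> = ereal (ln S + real CARD('k) * ln s + ln V)"
    unfolding objB_def S_def s_def V_def using assms by auto
  moreover have "exp (ln S + real CARD('k) * ln s + ln V) = S * s ^ CARD('k) * V"
    using S s V by (simp add: exp_add exp_of_nat_mult)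
  ultimately show ?thesis by (simp add: S_def s_def V_def mult_ac)
qed

lemma det_pos:
  assumes "\<forall>z. psd (L z)" "\<forall>i\<in>{1..n}. det (L (x i)) \<noteq> 0"
  shows "\<forall>i\<in>{1..n}. det (L (x i)) > 0"
  using assms det_psd_nonneg by (metis order_le_less)

lemma good:
  fixes L :: "real^'d \<Rightarrow> real^'k^'k"
  assumes r: "1 \<le> r" "r \<le> n" and fb: "feasB \<Theta> L p \<theta>"
    and d: "\<forall>i\<in>{1..n}. det (L (x i)) \<noteq> 0" and s: "sigma_res f x y n r L p \<theta> > 0"
  shows "feasA \<Theta> f x y n r (\<lambda>z. (1 / sigma_res f x y n r L p \<theta>) *\<^sub>R L z) p \<theta>
     \<and> objA f x n (\<lambda>z. (1 / sigma_res f x y n r L p \<theta>) *\<^sub>R L z) p \<theta> = gv n (objB f x y n r L p \<theta>)"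
proof -
  define \<sigma> where "\<sigma> = sigma_res f x y n r L p \<theta>"
  have fb': "\<forall>z. psd (L z)" "0 < p" "\<theta> \<in> \<Theta>" using fb by (auto simp: feasB_def)
  have dp: "\<forall>i\<in>{1..n}. det (L (x i)) > 0" using det_pos[OF fb'(1) d] .
  have sp: "\<sigma> > 0" using s \<sigma>_def by simp
  have "sigma_res f x y n r (\<lambda>z. (1 / \<sigma>) *\<^sub>R L z) p \<theta> = (1 / \<sigma>) * \<sigma>"
    using sigma_scale[OF r, of "1/\<sigma>" p f x y L \<theta>] sp fb' \<sigma>_def by simp
  then have s1: "sigma_res f x y n r (\<lambda>z. (1 / \<sigma>) *\<^sub>R L z) p \<theta> = 1" using sp by simp
  have fa: "feasA \<Theta> f x y n r (\<lambda>z. (1 / \<sigma>) *\<^sub>R L z) p \<theta>"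
    unfolding feasA_iff[OF r] using s1 fb' sp by (auto intro: psd_scale)
  have detM: "det ((1 / \<sigma>) *\<^sub>R L (x i)) = (1/\<sigma>) ^ CARD('k) * det (L (x i))" for i
    by (rule det_scaleR)
  have "objA f x n (\<lambda>z. (1 / \<sigma>) *\<^sub>R L z) p \<theta>
     = ereal (unit_ball_vol p CARD('k) * (\<Sum>i\<in>{1..n}. 1 / det ((1 / \<sigma>) *\<^sub>R L (x i))) / real n)"
    by (rule objA_fin) (use d sp detM in auto)
  also have "(\<Sum>i\<in>{1..n}. 1 / det ((1 / \<sigma>) *\<^sub>R L (x i))) = (\<Sum>i\<in>{1..n}. 1 / det (L (x i))) * \<sigma> ^ CARD('k)"
    unfolding detM sum_distrib_right using sp by (intro sum.cong) (auto simp: power_divide)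
  also have "ereal (unit_ball_vol p CARD('k) * ((\<Sum>i\<in>{1..n}. 1 / det (L (x i))) * \<sigma> ^ CARD('k)) / real n)
     = gv n (objB f x y n r L p \<theta>)"
    using objB_val[of n L x f y r p \<theta>] r dp sp fb' \<sigma>_def by (simp add: mult_ac)
  finally show ?thesis using fa \<sigma>_def by simp
qed

lemma feasA_bound:
  fixes M :: "real^'d \<Rightarrow> real^'k^'k"
  assumes r: "1 \<le> r" "r \<le> n" and fa: "feasA \<Theta> f x y n r M p \<theta>"
  shows "feasB \<Theta> M p \<theta> \<and> gv n (objB f x y n r M p \<theta>) \<le> objA f x n M p \<theta>"
proof -
  have fa': "\<forall>z. psd (M z)" "0 < p" "\<theta> \<in> \<Theta>" "sigma_res f x y n r M p \<theta> \<le> 1"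
    using fa unfolding feasA_iff[OF r] by auto
  have fb: "feasB \<Theta> M p \<theta>" using fa' by (simp add: feasB_def)
  have "gv n (objB f x y n r M p \<theta>) \<le> objA f x n M p \<theta>"
  proof (cases "\<exists>i\<in>{1..n}. det (M (x i)) = 0")
    case True
    then show ?thesis using objA_inf[of n M x f p \<theta>] r by simp
  next
    case False
    then have d: "\<forall>i\<in>{1..n}. det (M (x i)) \<noteq> 0" by auto
    have dp: "\<forall>i\<in>{1..n}. det (M (x i)) > 0" using det_pos[OF fa'(1) d] .
    define S where "S = (\<Sum>i\<in>{1..n}. 1 / det (M (x i)))"
    define V where "V = unit_ball_vol p CARD('k)"
    have S: "S > 0" unfolding S_def using dp r by (intro sum_pos) auto
    have V: "V > 0" unfolding V_def using fa' V_pos by blast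
    have oA: "objA f x n M p \<theta> = ereal (V * S / real n)"
      unfolding S_def V_def by (rule objA_fin) (use d in auto)
    show ?thesis
    proof (cases "sigma_res f x y n r M p \<theta> = 0")
      case True
      then have "objB f x y n r M p \<theta> = -\<infinity>" using False by (simp add: objB_def)
      then show ?thesis using oA S V by simp
    next
      case False
      define s where "s = sigma_res f x y n r M p \<theta>"
      have s: "0 < s" "s \<le> 1" using False sigma_nonneg[OF r] fa' s_def
        by (metis order_le_less) (use fa' s_def in simp)
      have "gv n (objB f x y n r M p \<theta>) = ereal (V * S * s ^ CARD('k) / real n)"
        unfolding V_def S_def s_def using objB_val[of n M x f y r p \<theta>] r dp s fa' s_def by simp
      moreover have "V * S * s ^ CARD('k) / real n \<le> V * S / real n"
        using S V s by (intro divide_right_mono mult_left_le) (auto simp: power_le_one)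
      ultimately show ?thesis using oA by simp
    qed
  qed
  then show ?thesis using fb by simp
qed

lemma zero_case:
  fixes L :: "real^'d \<Rightarrow> real^'k^'k"
  assumes r: "1 \<le> r" "r \<le> n" and fb: "feasB \<Theta> L p \<theta>"
    and d: "\<forall>i\<in>{1..n}. det (L (x i)) \<noteq> 0" and s: "sigma_res f x y n r L p \<theta> = 0"
  shows "valA \<Theta> f x y n r \<le> 0"
proof (rule dense_ge)
  fix yy :: ereal assume "0 < yy"
  show "valA \<Theta> f x y n r \<le> yy"
  proof (cases yy)
    case (real t)
    with \<open>0 < yy\<close> have t: "t > 0" by simp
    have fb': "\<forall>z. psd (L z)" "0 < p" "\<theta> \<in> \<Theta>" using fb by (auto simp: feasB_def)
    have dp: "\<forall>i\<in>{1..n}. det (L (x i)) > 0" using det_pos[OF fb'(1) d] .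
    define S where "S = (\<Sum>i\<in>{1..n}. 1 / det (L (x i)))"
    define V where "V = unit_ball_vol p CARD('k)"
    have S: "S > 0" unfolding S_def using dp r by (intro sum_pos) auto
    have V: "V > 0" unfolding V_def using fb' V_pos by blast
    have n: "real n > 0" using r by simp
    define c where "c = max 1 (V * S / (real n * t))"
    have c1: "c \<ge> 1" by (simp add: c_def)
    have cge: "c \<ge> V * S / (real n * t)" by (simp add: c_def)
    have "c ^ 1 \<le> c ^ CARD('k)" using c1 by (intro power_increasing) auto
    then have ck: "c \<le> c ^ CARD('k)" by simp
    have "sigma_res f x y n r (\<lambda>z. c *\<^sub>R L z) p \<theta> = c * 0"
      using sigma_scale[OF r, of c p f x y L \<theta>] c1 fb' s by simp
    then have fa: "feasA \<Theta> f x y n r (\<lambda>z. c *\<^sub>R L z) p \<theta>"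
      unfolding feasA_iff[OF r] using fb' c1 by (auto intro: psd_scale)
    have detM: "det (c *\<^sub>R L (x i)) = c ^ CARD('k) * det (L (x i))" for i
      by (rule det_scaleR)
    have "objA f x n (\<lambda>z. c *\<^sub>R L z) p \<theta>
       = ereal (V * (\<Sum>i\<in>{1..n}. 1 / det (c *\<^sub>R L (x i))) / real n)"
      unfolding V_def by (rule objA_fin) (use d c1 detM in auto)
    also have "(\<Sum>i\<in>{1..n}. 1 / det (c *\<^sub>R L (x i))) = S / c ^ CARD('k)"
      unfolding detM S_def sum_divide_distrib by (intro sum.cong) auto
    finally have oA: "objA f x n (\<lambda>z. c *\<^sub>R L z) p \<theta> = ereal (V * (S / c ^ CARD('k)) / real n)" .
    have "V * S \<le> real n * t * c"
      using cge n t by (simp add: pos_divide_le_eq mult_ac)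
    also have "\<dots> \<le> real n * t * c ^ CARD('k)"
      using ck n t by (intro mult_left_mono) auto
    finally have "V * (S / c ^ CARD('k)) / real n \<le> t"
      using n t c1 by (simp add: field_simps)
    then have "objA f x n (\<lambda>z. c *\<^sub>R L z) p \<theta> \<le> yy" using oA real by simp
    then show ?thesis using valA_le[OF fa] by (rule order_trans[rotated])
  next
    case PInf then show ?thesis by simp
  next
    case MInf then show ?thesis using \<open>0 < yy\<close> by simp
  qed
qed

theorem proposition3:
  fixes \<Theta> :: "'t set"
    and f :: "'t \<Rightarrow> real^'d \<Rightarrow> real^'k"
    and x :: "nat \<Rightarrow> real^'d" and y :: "nat \<Rightarrow> real^'k"
    and n r :: nat
  assumes "1 \<le> r" and "r \<le> n"
  shows "valA \<Theta> f x y n r =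
           (case valB \<Theta> f x y n r of
              ereal b \<Rightarrow> ereal (exp b / real n)
            | PInfty \<Rightarrow> \<infinity>
            | MInfty \<Rightarrow> 0)
         \<and> (\<forall>L p \<theta>. optB \<Theta> f x y n r L p \<theta> \<and> sigma_res f x y n r L p \<theta> \<noteq> 0 \<longrightarrow>
           optA \<Theta> f x y n r (\<lambda>z. (1 / sigma_res f x y n r L p \<theta>) *\<^sub>R L z) p \<theta>)"
proof -
  note r = assms
  have A_le: "valA \<Theta> f x y n r \<le> gv n (objB f x y n r L p \<theta>)" if fb: "feasB \<Theta> L p \<theta>"
    for L :: "real^'d \<Rightarrow> real^'k^'k" and p \<theta>
  proof (cases "\<exists>i\<in>{1..n}. det (L (x i)) = 0")
    case True
    then show ?thesis by (simp add: objB_def)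
  next
    case False
    then have d: "\<forall>i\<in>{1..n}. det (L (x i)) \<noteq> 0" by auto
    show ?thesis
    proof (cases "sigma_res f x y n r L p \<theta> = 0")
      case True
      then have "objB f x y n r L p \<theta> = -\<infinity>" using False by (simp add: objB_def)
      then show ?thesis using zero_case[OF r fb d True] by simp
    next
      case False
      then have s: "sigma_res f x y n r L p \<theta> > 0" using sigma_nonneg[OF r] by (metis order_le_less)
      from good[OF r fb d s] show ?thesis using valA_le by metis
    qed
  qed
  have ge: "gv n (valB \<Theta> f x y n r) \<le> valA \<Theta> f x y n r"
    unfolding valA_def
  proof (rule INF_greatest)
    fix z assume "z \<in> {(M, p, \<theta>). feasA \<Theta> f x y n r M p \<theta>}"
    then obtain M p \<theta> where z: "z = (M, p, \<theta>)" and fa: "feasA \<Theta> f x y n r M p \<theta>" by auto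
    from feasA_bound[OF r fa] have fb: "feasB \<Theta> M p \<theta>"
      and b: "gv n (objB f x y n r M p \<theta>) \<le> objA f x n M p \<theta>" by auto
    have "gv n (valB \<Theta> f x y n r) \<le> gv n (objB f x y n r M p \<theta>)"
      by (rule gv_mono) (rule valB_le[OF fb])
    then show "gv n (valB \<Theta> f x y n r) \<le> (case z of (M, p, \<theta>) \<Rightarrow> objA f x n M p \<theta>)"
      using b z by simp
  qed
  have le: "valA \<Theta> f x y n r \<le> gv n (valB \<Theta> f x y n r)"
  proof (rule dense_ge)
    fix yy :: ereal assume yy: "gv n (valB \<Theta> f x y n r) < yy"
    show "valA \<Theta> f x y n r \<le> yy"
    proof (cases yy)
      case (real t)
      have "0 < yy" by (rule le_less_trans[OF gv_nonneg yy])
      then have t: "t > 0" using real by simp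
      have n: "real n > 0" using r by simp
      define b where "b = ln (t * real n)"
      have gb: "gv n (ereal b) = yy" using t n real by (simp add: b_def)
      have "valB \<Theta> f x y n r < ereal b"
      proof (rule ccontr)
        assume "\<not> valB \<Theta> f x y n r < ereal b"
        then have "ereal b \<le> valB \<Theta> f x y n r" by simp
        from gv_mono[OF this, of n] gb yy show False by simp
      qed
      then obtain z where zin: "z \<in> {(L, p, \<theta>). feasB \<Theta> L p \<theta>}"
        and zl: "(case z of (L, p, \<theta>) \<Rightarrow> objB f x y n r L p \<theta>) < ereal b"
        unfolding valB_def INF_less_iff by blast
      then obtain L p \<theta> where z: "z = (L, p, \<theta>)" and fb: "feasB \<Theta> L p \<theta>" by auto
      have "objB f x y n r L p \<theta> \<le> ereal b" using zl z by simp
      then have "gv n (objB f x y n r L p \<theta>) \<le> yy" using gb gv_mono by metis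
      then show ?thesis using A_le[OF fb] by simp
    next
      case PInf then show ?thesis by simp
    next
      case MInf then show ?thesis using yy gv_nonneg[of n "valB \<Theta> f x y n r"] by simp
    qed
  qed
  have eqv: "valA \<Theta> f x y n r = gv n (valB \<Theta> f x y n r)" using ge le by simp
  have part2: "optA \<Theta> f x y n r (\<lambda>z. (1 / sigma_res f x y n r L p \<theta>) *\<^sub>R L z) p \<theta>"
    if ob: "optB \<Theta> f x y n r L p \<theta>" and sn: "sigma_res f x y n r L p \<theta> \<noteq> 0" for L p \<theta>
  proof -
    have fb: "feasB \<Theta> L p \<theta>" and opt: "\<And>L' p' \<theta>'. feasB \<Theta> L' p' \<theta>' \<Longrightarrow>
        objB f x y n r L p \<theta> \<le> objB f x y n r L' p' \<theta>'" using ob by (auto simp: optB_def)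
    have fI: "feasB \<Theta> (\<lambda>_. mat 1) p \<theta>" using fb by (simp add: feasB_def psd_one)
    have "objB f x y n r (\<lambda>_. mat 1) p \<theta> \<noteq> \<infinity>" by (simp add: objB_def)
    then have "objB f x y n r L p \<theta> \<noteq> \<infinity>" using opt[OF fI] by auto
    then have d: "\<forall>i\<in>{1..n}. det (L (x i)) \<noteq> 0" unfolding objB_def by (metis (no_types, lifting))
    have s: "sigma_res f x y n r L p \<theta> > 0" using sn sigma_nonneg[OF r] by (metis order_le_less)
    have vB: "objB f x y n r L p \<theta> = valB \<Theta> f x y n r"
    proof (rule antisym)
      show "objB f x y n r L p \<theta> \<le> valB \<Theta> f x y n r"
        unfolding valB_def by (rule INF_greatest) (auto intro: opt)
      show "valB \<Theta> f x y n r \<le> objB f x y n r L p \<theta>" by (rule valB_le[OF fb])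
    qed
    from good[OF r fb d s] have fa: "feasA \<Theta> f x y n r (\<lambda>z. (1 / sigma_res f x y n r L p \<theta>) *\<^sub>R L z) p \<theta>"
      and oa: "objA f x n (\<lambda>z. (1 / sigma_res f x y n r L p \<theta>) *\<^sub>R L z) p \<theta> = valA \<Theta> f x y n r"
      using vB eqv by auto
    show ?thesis unfolding optA_def using fa oa valA_le by auto
  qed
  have "(case valB \<Theta> f x y n r of ereal b \<Rightarrow> ereal (exp b / real n) | PInfty \<Rightarrow> \<infinity> | MInfty \<Rightarrow> 0)
      = gv n (valB \<Theta> f x y n r)" by (simp add: gv_def)
  then show ?thesis using eqv part2 by auto
qed

end
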